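(* Let $x,y\ge 1$ and let $n\ge \max(x,y)$ be an integer for which minimal $(x,y)$ task-dependency graphs of order $n$ exist. The maximum possible number of edges of a minimal $(x,y)$ task-dependency graph of order $n$ is $0$ if $n=\max(x,y)$ (in which case $x=y$), $2n-x-y-1$ if $n=\max(x,y)+1$, and $2n-x-y-2$ if $n>\max(x,y)+1$.
   Context: A task-dependency graph is a finite directed acyclic graph (no loops, no multiple edges). A vertex is initial if it has in-degree $0$ and terminal if it has out-degree $0$; an isolated vertex counts as both initial and terminal. An $(x,y)$ task-dependency graph is a task-dependency graph with exactly $x$ initial vertices and exactly $y$ terminal vertices. A minimal $(x,y)$ task-dependency graph is an $(x,y)$ task-dependency graph such that removing any single edge produces a graph that is not an $(x,y)$ task-dependency graph. The order of a graph is its number of vertices. *)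

theory Defs
  imports Main
begin

text \<open>A directed graph is given by a vertex set V and an edge relation E \<subseteq> V \<times> V
  (so there are no multiple edges). A task-dependency graph is a finite
  directed acyclic graph; acyclicity (no (v,v) in the transitive closure) also
  excludes loops.\<close>

definition tdg :: "'a set \<Rightarrow> ('a \<times> 'a) set \<Rightarrow> bool" where
  "tdg V E \<longleftrightarrow> finite V \<and> E \<subseteq> V \<times> V \<and> acyclic E"

definition initial_vertices :: "'a set \<Rightarrow> ('a \<times> 'a) set \<Rightarrow> 'a set" where
  "initial_vertices V E = {v \<in> V. \<forall>u. (u, v) \<notin> E}"

definition terminal_vertices :: "'a set \<Rightarrow> ('a \<times> 'a) set \<Rightarrow> 'a set" where
  "terminal_vertices V E = {v \<in> V. \<forall>w. (v, w) \<notin> E}"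

definition xy_tdg :: "nat \<Rightarrow> nat \<Rightarrow> 'a set \<Rightarrow> ('a \<times> 'a) set \<Rightarrow> bool" where
  "xy_tdg x y V E \<longleftrightarrow> tdg V E \<and> card (initial_vertices V E) = x
      \<and> card (terminal_vertices V E) = y"

definition minimal_xy_tdg :: "nat \<Rightarrow> nat \<Rightarrow> 'a set \<Rightarrow> ('a \<times> 'a) set \<Rightarrow> bool" where
  "minimal_xy_tdg x y V E \<longleftrightarrow> xy_tdg x y V E \<and> (\<forall>e \<in> E. \<not> xy_tdg x y V (E - {e}))"

end

theory Submission
  imports Defs
begin

lemma min_edge:
  assumes m: "minimal_xy_tdg x y V E"
    and e: "(u,v) \<in> E" "(u,w) \<in> E" "w \<noteq> v" "(u',v) \<in> E"
  shows "u' = u"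
proof (rule ccontr)
  assume ne: "u' \<noteq> u"
  let ?E' = "E - {(u,v)}"
  have i: "initial_vertices V ?E' = initial_vertices V E"
    unfolding initial_vertices_def using e ne by blast
  have t: "terminal_vertices V ?E' = terminal_vertices V E"
    unfolding terminal_vertices_def using e ne by blast
  have "tdg V ?E'" using m unfolding minimal_xy_tdg_def xy_tdg_def tdg_def
    by (auto intro: acyclic_subset)
  then have "xy_tdg x y V ?E'" using m i t unfolding minimal_xy_tdg_def xy_tdg_def by simp
  moreover from m have "\<not> xy_tdg x y V ?E'" using e(1) unfolding minimal_xy_tdg_def by blast
  ultimately show False by simp
qed

lemma eq_case:
  assumes m: "xy_tdg x y V E" and n: "card V = n" and nx: "n = x \<or> n = y"
  shows "E = {} \<and> x = y"
proof -
  have fin: "finite V" and sub: "E \<subseteq> V \<times> V" and cx: "card (initial_vertices V E) = x"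
    and cy: "card (terminal_vertices V E) = y"
    using m by (auto simp: xy_tdg_def tdg_def)
  have iv: "initial_vertices V E \<subseteq> V" "terminal_vertices V E \<subseteq> V"
    by (auto simp: initial_vertices_def terminal_vertices_def)
  have "E = {}"
  proof (cases "n = x")
    case True
    then have "initial_vertices V E = V" using card_subset_eq[OF fin iv(1)] cx n by simp
    then show ?thesis using sub unfolding initial_vertices_def by fastforce
  next
    case False
    then have "n = y" using nx by simp
    then have "terminal_vertices V E = V" using card_subset_eq[OF fin iv(2)] cy n by simp
    then show ?thesis using sub unfolding terminal_vertices_def by fastforce
  qed
  moreover then have "initial_vertices V E = V" "terminal_vertices V E = V"
    by (auto simp: initial_vertices_def terminal_vertices_def)
  ultimately show ?thesis using cx cy by simp
qed

lemma arith_fact: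
  fixes a b c d x y n :: nat
  assumes "a + c \<le> n - y" "b + d \<le> n - x" "0 < a \<Longrightarrow> 1 \<le> d" "0 < b \<Longrightarrow> 1 \<le> c"
    "0 < a + b" "max x y < n"
  shows "a + b \<le> (if n = max x y + 1 then 2*n-x-y-1 else 2*n-x-y-2)"
proof (cases "a = 0")
  case True
  then show ?thesis using assms by (cases "x \<le> y") (simp_all add: max_def, arith+)
next
  case False
  then show ?thesis using assms by (cases "b = 0"; cases "x \<le> y") (simp_all add: max_def, arith+)
qed

lemma upper_bound:
  assumes m: "minimal_xy_tdg x y V E" and n: "card V = n" and gt: "max x y < n"
  shows "card E \<le> (if n = max x y + 1 then 2*n-x-y-1 else 2*n-x-y-2)"
proof -
  have fin: "finite V" and sub: "E \<subseteq> V \<times> V" and cx: "card (initial_vertices V E) = x"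
    and cy: "card (terminal_vertices V E) = y"
    using m by (auto simp: minimal_xy_tdg_def xy_tdg_def tdg_def)
  have finE: "finite E" using fin sub finite_subset by blast
  define EA where "EA = {e\<in>E. \<forall>w. (fst e, w)\<in>E \<longrightarrow> w = snd e}"
  define ER where "ER = E - EA"
  have ER_in: "u' = u" if "(u,v)\<in>ER" "(u',v)\<in>E" for u v u'
  proof -
    from that(1) obtain w where "(u,v)\<in>E" "(u,w)\<in>E" "w \<noteq> v"
      unfolding ER_def EA_def by auto
    then show ?thesis using min_edge[OF m] that(2) by blast
  qed
  have injA: "inj_on fst EA" unfolding EA_def inj_on_def by auto
  have injR: "inj_on snd ER"
    unfolding inj_on_def
  proof (intro ballI impI)
    fix a b assume "a \<in> ER" "b \<in> ER" "snd a = snd b"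
    then show "a = b" using ER_in[of "fst a" "snd a" "fst b"] unfolding ER_def
      by (metis DiffD1 prod.collapse)
  qed
  have disj1: "fst ` EA \<inter> fst ` ER = {}"
  proof (rule ccontr)
    assume "fst ` EA \<inter> fst ` ER \<noteq> {}"
    then obtain a b where ab: "a \<in> EA" "b \<in> ER" "fst a = fst b" by blast
    then have "b \<in> E" "a \<in> E" "\<forall>w. (fst a, w)\<in>E \<longrightarrow> w = snd a" unfolding EA_def ER_def by auto
    then have "\<forall>w. (fst b, w)\<in>E \<longrightarrow> w = snd b" using ab(3) by (metis prod.collapse)
    then show False using ab(2) \<open>b \<in> E\<close> unfolding ER_def EA_def by auto
  qed
  have disj2: "snd ` EA \<inter> snd ` ER = {}"
  proof (rule ccontr)
    assume "snd ` EA \<inter> snd ` ER \<noteq> {}"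
    then obtain a b where ab: "a \<in> EA" "b \<in> ER" "snd a = snd b" by blast
    have "a \<in> E" using ab unfolding EA_def by simp
    then have "fst a = fst b" using ER_in[of "fst b" "snd b" "fst a"] ab
      by (metis prod.collapse)
    then have "a = b" using ab by (simp add: prod_eq_iff)
    then show False using ab unfolding ER_def by simp
  qed
  have EAE: "EA \<subseteq> E" and ERE: "ER \<subseteq> E" unfolding EA_def ER_def by auto
  have s1: "fst ` EA \<union> fst ` ER \<subseteq> V - terminal_vertices V E"
    using EAE ERE sub unfolding terminal_vertices_def by force
  have s2: "snd ` EA \<union> snd ` ER \<subseteq> V - initial_vertices V E"
    using EAE ERE sub unfolding initial_vertices_def by force
  have iv: "initial_vertices V E \<subseteq> V" "terminal_vertices V E \<subseteq> V"
    by (auto simp: initial_vertices_def terminal_vertices_def)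
  have c1: "card (V - terminal_vertices V E) = n - y"
    using card_Diff_subset[OF finite_subset[OF iv(2) fin] iv(2)] cy n by simp
  have c2: "card (V - initial_vertices V E) = n - x"
    using card_Diff_subset[OF finite_subset[OF iv(1) fin] iv(1)] cx n by simp
  have finA: "finite EA" "finite ER" using EAE ERE finE finite_subset by auto
  have i1: "card EA + card (fst ` ER) \<le> n - y"
  proof -
    have "card EA + card (fst ` ER) = card (fst ` EA \<union> fst ` ER)"
      using card_Un_disjoint[OF finite_imageI[OF finA(1)] finite_imageI[OF finA(2)] disj1]
        card_image[OF injA] by simp
    also have "\<dots> \<le> n - y" using card_mono[OF _ s1] fin c1 by simp
    finally show ?thesis .
  qed
  have i2: "card ER + card (snd ` EA) \<le> n - x"
  proof -
    have "card ER + card (snd ` EA) = card (snd ` EA \<union> snd ` ER)"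
      using card_Un_disjoint[OF finite_imageI[OF finA(1)] finite_imageI[OF finA(2)] disj2]
        card_image[OF injR] by simp
    also have "\<dots> \<le> n - x" using card_mono[OF _ s2] fin c2 by simp
    finally show ?thesis .
  qed
  have cE: "card E = card EA + card ER"
  proof -
    have "E = EA \<union> ER" "EA \<inter> ER = {}" unfolding ER_def using EAE by auto
    then show ?thesis using card_Un_disjoint[OF finA] by simp
  qed
  have d1: "card (snd ` EA) \<ge> 1" if "card EA > 0"
    using that finA(1) by (simp add: Suc_le_eq card_gt_0_iff)
  have d2: "card (fst ` ER) \<ge> 1" if "card ER > 0"
    using that finA(2) by (simp add: Suc_le_eq card_gt_0_iff)
  have Ene: "card E > 0"
  proof (rule ccontr)
    assume "\<not> card E > 0"
    then have "E = {}" using finE by simp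
    then have "initial_vertices V E = V" by (auto simp: initial_vertices_def)
    then show False using cx n gt by simp
  qed
  show ?thesis using arith_fact[OF i1 i2 d1 d2 _ gt] cE Ene by simp
qed


lemma minimal_intro:
  assumes xy: "xy_tdg x y V E"
    and ed: "\<And>u v. (u,v) \<in> E \<Longrightarrow> (\<forall>w. (u,w)\<in>E \<longrightarrow> w = v) \<or> (\<forall>w. (w,v)\<in>E \<longrightarrow> w = u)"
  shows "minimal_xy_tdg x y V E"
  unfolding minimal_xy_tdg_def
proof (intro conjI xy ballI notI)
  fix e assume eE: "e \<in> E" and m: "xy_tdg x y V (E - {e})"
  obtain u v where e: "e = (u,v)" by (cases e)
  have fin: "finite V" and sub: "E \<subseteq> V \<times> V"
    using xy by (auto simp: xy_tdg_def tdg_def)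
  show False
  proof (cases "\<forall>w. (u,w)\<in>E \<longrightarrow> w = v")
    case True
    have "terminal_vertices V E \<subset> terminal_vertices V (E - {e})"
      using True eE e sub unfolding terminal_vertices_def by blast
    moreover have "finite (terminal_vertices V (E - {e}))"
      using fin by (simp add: terminal_vertices_def)
    ultimately have "card (terminal_vertices V E) < card (terminal_vertices V (E - {e}))"
      by (rule psubset_card_mono[rotated])
    then show False using xy m by (simp add: xy_tdg_def)
  next
    case False
    then have True: "\<forall>w. (w,v)\<in>E \<longrightarrow> w = u" using ed eE e by blast
    have "initial_vertices V E \<subset> initial_vertices V (E - {e})"
      using True eE e sub unfolding initial_vertices_def by blast
    moreover have "finite (initial_vertices V (E - {e}))"
      using fin by (simp add: initial_vertices_def)
    ultimately have "card (initial_vertices V E) < card (initial_vertices V (E - {e}))"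
      by (rule psubset_card_mono[rotated])
    then show False using xy m by (simp add: xy_tdg_def)
  qed
qed

lemma xy_conv: "xy_tdg y x V (E\<inverse>) \<longleftrightarrow> xy_tdg x y V E"
proof -
  have "initial_vertices V (E\<inverse>) = terminal_vertices V E"
    "terminal_vertices V (E\<inverse>) = initial_vertices V E"
    by (auto simp: initial_vertices_def terminal_vertices_def)
  moreover have "tdg V (E\<inverse>) \<longleftrightarrow> tdg V E" by (auto simp: tdg_def)
  ultimately show ?thesis by (auto simp: xy_tdg_def)
qed

lemma minimal_conv:
  assumes "minimal_xy_tdg x y V E"
  shows "minimal_xy_tdg y x V (E\<inverse>)"
  unfolding minimal_xy_tdg_def
proof (intro conjI ballI)
  show "xy_tdg y x V (E\<inverse>)" using assms xy_conv by (auto simp: minimal_xy_tdg_def)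
  fix e assume "e \<in> E\<inverse>"
  then obtain a b where e: "e = (b,a)" "(a,b) \<in> E" by auto
  have "E\<inverse> - {e} = (E - {(a,b)})\<inverse>" using e by auto
  then show "\<not> xy_tdg y x V (E\<inverse> - {e})" using assms e xy_conv[of y x V "E - {(a,b)}"]
    by (auto simp: minimal_xy_tdg_def)
qed

lemma card_conv: "card (E\<inverse>) = card E"
proof -
  have "E\<inverse> = prod.swap ` E" by auto
  then show ?thesis by (simp add: card_image)
qed

lemma acyc_nat: "E \<subseteq> {(i::nat,j). i < j} \<Longrightarrow> acyclic E"
  by (rule wf_acyclic, rule wf_subset[OF wf_less_than]) (auto simp: less_than_iff)

lemma star_constr:
  fixes m j :: nat
  assumes "1 \<le> j" "j \<le> m"
  shows "\<exists>(V::nat set) E. minimal_xy_tdg m (m + 1 - j) V E \<and> card V = m + 1 \<and> card E = j"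
proof -
  define V where "V = {0..m}"
  define E where "E = {(u,v). v = m \<and> u < j}"
  have t: "tdg V E" unfolding tdg_def V_def E_def
    using assms by (auto intro!: acyc_nat)
  have i: "initial_vertices V E = {0..<m}"
    unfolding initial_vertices_def V_def E_def using assms by auto
  have te: "terminal_vertices V E = {j..m}"
    unfolding terminal_vertices_def V_def E_def using assms by auto
  have xy: "xy_tdg m (m + 1 - j) V E" unfolding xy_tdg_def using t i te by simp
  have "minimal_xy_tdg m (m + 1 - j) V E"
    by (rule minimal_intro[OF xy]) (auto simp: E_def)
  moreover have "E = (\<lambda>u. (u,m)) ` {0..<j}" unfolding E_def by auto
  then have "card E = j" by (simp add: card_image inj_on_def)
  ultimately show ?thesis by (intro exI[of _ V] exI[of _ E]) (simp add: V_def)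
qed

lemma gen_constr:
  fixes k p q r :: nat
  assumes k: "1 \<le> k"
  shows "\<exists>(V::nat set) E. minimal_xy_tdg (1+p+r) (1+q+r) V E \<and> card V = 2+k+p+q+r
            \<and> card E = 2*k+p+q"
proof -
  define B where "B = 1+k+p+q+r"
  define V where "V = {0..B}"
  define E where "E = {(u,v). (u = 0 \<and> (1 \<le> v \<and> v \<le> k \<or> k+p+1 \<le> v \<and> v \<le> k+p+q))
                              \<or> (v = B \<and> 1 \<le> u \<and> u \<le> k+p)}"
  have t: "tdg V E" unfolding tdg_def V_def E_def B_def
    using assms by (auto intro!: acyc_nat)
  have inn: "(\<exists>u. (u,z)\<in>E) \<longleftrightarrow> (1 \<le> z \<and> z \<le> k \<or> k+p+1 \<le> z \<and> z \<le> k+p+q \<or> z = B)" for z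
  proof
    assume "\<exists>u. (u,z)\<in>E" then show "(1 \<le> z \<and> z \<le> k \<or> k+p+1 \<le> z \<and> z \<le> k+p+q \<or> z = B)"
      unfolding E_def by auto
  next
    assume "(1 \<le> z \<and> z \<le> k \<or> k+p+1 \<le> z \<and> z \<le> k+p+q \<or> z = B)"
    then have "(0,z) \<in> E \<or> (1,z) \<in> E" unfolding E_def using k by auto
    then show "\<exists>u. (u,z)\<in>E" by blast
  qed
  have i: "initial_vertices V E = {0} \<union> {k+1..k+p} \<union> {k+p+q+1..<B}"
  proof -
    have "initial_vertices V E = {z\<in>V. \<not> (\<exists>u. (u,z)\<in>E)}"
      unfolding initial_vertices_def by blast
    also have "\<dots> = {0} \<union> {k+1..k+p} \<union> {k+p+q+1..<B}"
      unfolding inn V_def B_def by auto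
    finally show ?thesis .
  qed
  have out: "(\<exists>w. (z,w)\<in>E) \<longleftrightarrow> (z \<le> k+p)" for z
  proof
    assume "\<exists>w. (z,w)\<in>E" then show "z \<le> k+p"
      unfolding E_def by auto
  next
    assume "z \<le> k+p"
    then have "(z,1) \<in> E \<or> (z,B) \<in> E" unfolding E_def using k by auto
    then show "\<exists>w. (z,w)\<in>E" by blast
  qed
  have te: "terminal_vertices V E = {k+p+1..B}"
  proof -
    have "terminal_vertices V E = {z\<in>V. \<not> (\<exists>w. (z,w)\<in>E)}"
      unfolding terminal_vertices_def by blast
    also have "\<dots> = {k+p+1..B}"
      unfolding out V_def B_def by auto
    finally show ?thesis .
  qed
  have ci: "card ({0} \<union> {k+1..k+p} \<union> {k+p+q+1..<B}) = 1+p+r"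
    by (subst card_Un_disjoint; auto simp: B_def)+
  have xy: "xy_tdg (1+p+r) (1+q+r) V E" unfolding xy_tdg_def using t i te ci
    by (simp add: B_def)
  have mi: "minimal_xy_tdg (1+p+r) (1+q+r) V E"
    by (rule minimal_intro[OF xy]) (auto simp: E_def B_def)
  have "E = (\<lambda>v. (0,v)) ` ({1..k} \<union> {k+p+1..k+p+q}) \<union> (\<lambda>u. (u,B)) ` {1..k+p}"
    unfolding E_def by auto
  moreover have "card ((\<lambda>v. (0::nat,v)) ` ({1..k} \<union> {k+p+1..k+p+q})) = k + q"
  proof -
    have "card ({1..k} \<union> {k+p+1..k+p+q}) = k + q"
      by (subst card_Un_disjoint) auto
    then show ?thesis by (simp add: card_image inj_on_def)
  qed
  moreover have "card ((\<lambda>u. (u,B)) ` {1..k+p}) = k + p"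
    by (simp add: card_image inj_on_def)
  moreover have "(\<lambda>v. (0::nat,v)) ` ({1..k} \<union> {k+p+1..k+p+q}) \<inter> (\<lambda>u. (u,B)) ` {1..k+p} = {}"
    by (auto simp: B_def)
  ultimately have "card E = 2*k+p+q"
    by (simp add: card_Un_disjoint)
  then show ?thesis using mi by (intro exI[of _ V] exI[of _ E]) (simp add: V_def B_def)
qed


theorem mainTheorem1:
  fixes x y n :: nat
  assumes "x \<ge> 1" and "y \<ge> 1" and "n \<ge> max x y"
    and "\<exists>(V :: nat set) E. minimal_xy_tdg x y V E \<and> card V = n"
  shows "(n = max x y \<longrightarrow> x = y) \<and>
    Max {card E | (V :: nat set) E. minimal_xy_tdg x y V E \<and> card V = n} =
      (if n = max x y then 0
       else if n = max x y + 1 then 2 * n - x - y - 1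
       else 2 * n - x - y - 2)"
proof -
  define S where "S = {card E | (V :: nat set) E. minimal_xy_tdg x y V E \<and> card V = n}"
  define b where "b = (if n = max x y then 0
       else if n = max x y + 1 then 2 * n - x - y - 1
       else 2 * n - x - y - 2)"
  obtain V0 :: "nat set" and E0 where m0: "minimal_xy_tdg x y V0 E0" "card V0 = n"
    using assms(4) by blast
  have x0: "xy_tdg x y V0 E0" using m0 by (simp add: minimal_xy_tdg_def)
  have p1: "n = max x y \<longrightarrow> x = y"
  proof
    assume "n = max x y"
    then have "n = x \<or> n = y" by (simp add: max_def)
    then show "x = y" using eq_case[OF x0 m0(2)] by simp
  qed
  have le: "c \<le> b" if "c \<in> S" for c
  proof -
    from that obtain V :: "nat set" and E where m: "minimal_xy_tdg x y V E" "card V = n" "c = card E"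
      unfolding S_def by blast
    show ?thesis
    proof (cases "n = max x y")
      case True
      then have "n = x \<or> n = y" by (simp add: max_def)
      then have "E = {}" using eq_case[of x y V E n] m by (simp add: minimal_xy_tdg_def)
      then show ?thesis using m by simp
    next
      case False
      then have "max x y < n" using assms(3) by (metis le_neq_trans)
      then show ?thesis using upper_bound[OF m(1) m(2)] m False unfolding b_def by simp
    qed
  qed
  have mem: "b \<in> S"
  proof (cases "n = max x y")
    case True
    then have "n = x \<or> n = y" by (simp add: max_def)
    then have "E0 = {}" using eq_case[OF x0 m0(2)] by simp
    then have "card E0 = b" using True unfolding b_def by simp
    then show ?thesis unfolding S_def using m0 by blast
  next
    case False
    show ?thesis
    proof (cases "n = max x y + 1")
      case True
      show ?thesis
      proof (cases "y \<le> x")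
        case True
        have j: "1 \<le> x + 1 - y" "x + 1 - y \<le> x" using True assms(2) by simp_all
        obtain V :: "nat set" and E where
          VE: "minimal_xy_tdg x (x + 1 - (x + 1 - y)) V E" "card V = x + 1" "card E = x + 1 - y"
          using star_constr[OF j] by blast
        have "x + 1 - (x + 1 - y) = y" using True by simp
        then have m: "minimal_xy_tdg x y V E" using VE by simp
        have "b = card E" "card V = n" using VE \<open>n = max x y + 1\<close> True False unfolding b_def
          by (auto simp: max_def)
        then show ?thesis using m unfolding S_def by blast
      next
        case False
        have j: "1 \<le> y + 1 - x" "y + 1 - x \<le> y" using False assms(1) by simp_all
        obtain V :: "nat set" and E where
          VE: "minimal_xy_tdg y (y + 1 - (y + 1 - x)) V E" "card V = y + 1" "card E = y + 1 - x"
          using star_constr[OF j] by blast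
        have "y + 1 - (y + 1 - x) = x" using False by simp
        then have "minimal_xy_tdg x y V (E\<inverse>)" using minimal_conv[OF VE(1)] by simp
        moreover have "card (E\<inverse>) = y + 1 - x" using VE card_conv by simp
        moreover have "b = y + 1 - x" "card V = n" using VE \<open>n = max x y + 1\<close> False \<open>n \<noteq> max x y\<close>
          unfolding b_def by (auto simp: max_def)
        ultimately show ?thesis unfolding S_def by (metis (mono_tags, lifting) mem_Collect_eq)
      qed
    next
      case False2: False
      define k where "k = n - max x y - 1"
      define p where "p = x - min x y"
      define q where "q = y - min x y"
      define r where "r = min x y - 1"
      have k1: "1 \<le> k" using False False2 assms(3) unfolding k_def by (simp add: max_def split: if_splits)
      obtain V :: "nat set" and E where
        VE: "minimal_xy_tdg (1+p+r) (1+q+r) V E" "card V = 2+k+p+q+r" "card E = 2*k+p+q"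
        using gen_constr[OF k1, of p r q] by blast
      have e1: "1+p+r = x" "1+q+r = y" "2+k+p+q+r = n" "2*k+p+q = 2 * n - x - y - 2"
        unfolding k_def p_def q_def r_def using assms(1-3) False False2
        by (simp_all add: max_def min_def split: if_splits)
      have "b = card E" using VE e1 False False2 unfolding b_def by simp
      moreover have "minimal_xy_tdg x y V E" "card V = n" using VE e1 by simp_all
      ultimately show ?thesis unfolding S_def by blast
    qed
  qed
  have fin: "finite S"
    by (rule finite_subset[of S "{0..b}"]) (auto simp: le)
  have "Max S = b" by (rule Max_eqI[OF fin le mem])
  then show ?thesis using p1 unfolding S_def b_def by simp
qed

end
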